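(* Let $p$ be an odd prime and $a,c$ positive integers such that $c$ is a primitive divisor of $p^a-1$. If $\tfrac{p^a-1}{c}$ is odd, then $$g\Big(\tfrac{p^{2a}-1}{2c},\,p^{2a}\Big)=2\,g\Big(\tfrac{p^a-1}{c},\,p^a\Big).$$
   Context: For a prime power $q$ and a positive integer $k$, the Waring number $g(k,q)$ is the smallest $s$ (if it exists) such that every element of $\mathbb{F}_q$ is a sum of $s$ $k$-th powers of elements of $\mathbb{F}_q$. An integer $e$ is a primitive divisor of $p^a-1$ if $e\mid p^a-1$ and $e\nmid p^t-1$ for every $1\le t<a$. *)

theory Defs
  imports "HOL-Computational_Algebra.Primes"
begin

definition sum_of_kth_powers :: "nat \<Rightarrow> nat \<Rightarrow> 'a::field \<Rightarrow> bool" where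
  "sum_of_kth_powers k s x \<longleftrightarrow> (\<exists>f :: nat \<Rightarrow> 'a. x = (\<Sum>i<s. f i ^ k))"

text \<open>Waring number g(k,q) of the finite field 'a (with q = CARD('a)):
  the smallest s such that every element is a sum of s k-th powers.\<close>
definition waring_number :: "nat \<Rightarrow> 'a::{finite,field} itself \<Rightarrow> nat" where
  "waring_number k _ = (LEAST s. \<forall>x :: 'a. sum_of_kth_powers k s x)"

definition primitive_divisor :: "nat \<Rightarrow> nat \<Rightarrow> nat \<Rightarrow> bool" where
  "primitive_divisor e p a \<longleftrightarrow>
     e dvd p ^ a - 1 \<and> (\<forall>t. 1 \<le> t \<and> t < a \<longrightarrow> \<not> e dvd p ^ t - 1)"

end

theory Submission
  imports Defs "HOL-Algebra.Multiplicative_Group" "HOL-Computational_Algebra.Polynomial"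
begin

abbreviation cls_ring :: "'a :: {times,plus,one,zero} ring" where
  "cls_ring \<equiv> \<lparr> carrier = UNIV, mult = (*), one = 1, zero = 0, add = (+) \<rparr>"

lemma cls_field: "field (cls_ring :: 'a :: field ring)"
proof -
  have [simp]: "\<exists>y::'a. x + y = 0" for x :: 'a by (rule exI[of _ "-x"], auto)
  have [simp]: "x \<noteq> 0 \<Longrightarrow> \<exists>xa::'a. xa * x = 1 \<and> x * xa = 1" for x :: 'a
    by (intro exI[of _ "inverse x"], auto)
  have [simp]: "x \<noteq> 0 \<Longrightarrow> \<exists>xa::'a. x * xa = 1" for x :: 'a
    by (intro exI[of _ "inverse x"], auto)
  show ?thesis
    by (unfold_locales, auto simp: field_simps Units_def)
qed

lemma cls_pow: "x [^]\<^bsub>(cls_ring :: 'a :: field ring)\<^esub> (n::nat) = x ^ n"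
  by (induct n) (auto simp: mult.commute)

lemma gen_exists0:
  "\<exists>g::'a::{finite,field}. \<forall>x. x \<noteq> 0 \<longrightarrow> (\<exists>i::nat. x = g ^ i)"
proof -
  interpret field "cls_ring :: 'a ring" by (rule cls_field)
  have "\<exists>a\<in>UNIV - {0::'a}. UNIV - {0::'a} = {a [^]\<^bsub>(cls_ring :: 'a ring)\<^esub> i |i::nat. True}"
  proof -
    have F: "field (cls_ring :: 'a ring)" by (rule cls_field)
    have "finite (carrier (cls_ring :: 'a ring))" by simp
    from field.finite_field_mult_group_has_gen[OF F this] show ?thesis by simp
  qed
  then obtain a :: 'a where h: "UNIV - {0::'a} = {a [^]\<^bsub>(cls_ring :: 'a ring)\<^esub> i |i::nat. True}"
    by blast
  show ?thesis
  proof (rule exI[of _ a], intro allI impI)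
    fix x :: 'a assume "x \<noteq> 0"
    then have "x \<in> UNIV - {0}" by simp
    then show "\<exists>i. x = a ^ i" unfolding h by (auto simp: cls_pow)
  qed
qed

lemma card_ge2: "card (UNIV :: 'a::{finite,field} set) \<ge> 2"
proof -
  have "card {0::'a, 1} \<le> card (UNIV::'a set)" by (rule card_mono) auto
  then show ?thesis by simp
qed

lemma card_nonzero: "card (UNIV - {0::'a::{finite,field}}) = card (UNIV::'a set) - 1"
  by (simp add: card_Diff_subset)

lemma unit_pow_card:
  fixes y :: "'a::{finite,field}"
  assumes "y \<noteq> 0"
  shows "y ^ (card (UNIV::'a set) - 1) = 1"
proof -
  let ?U = "UNIV - {0::'a}"
  have bij: "bij_betw (\<lambda>x. y * x) ?U ?U"
    unfolding bij_betw_def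
  proof
    show "inj_on ((*) y) ?U" using assms by (auto simp: inj_on_def)
    show "(*) y ` ?U = ?U"
    proof
      show "(*) y ` ?U \<subseteq> ?U" using assms by auto
      show "?U \<subseteq> (*) y ` ?U"
      proof
        fix x assume "x \<in> ?U"
        then have "x = y * (x / y)" "x / y \<in> ?U" using assms by auto
        then show "x \<in> (*) y ` ?U" by blast
      qed
    qed
  qed
  have "(\<Prod>x\<in>?U. y * x) = (\<Prod>x\<in>?U. x)"
    using prod.reindex_bij_betw[OF bij, of "\<lambda>x. x"] by simp
  moreover have "(\<Prod>x\<in>?U. y * x) = y ^ card ?U * (\<Prod>x\<in>?U. x)"
    by (simp add: prod.distrib)
  moreover have "(\<Prod>x\<in>?U. x) \<noteq> 0" by simp
  ultimately have "y ^ card ?U = 1" by simp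
  then show ?thesis by (simp add: card_nonzero)
qed

lemma gen_exists:
  "\<exists>g::'a::{finite,field}. g \<noteq> 0 \<and> (\<forall>x. x \<noteq> 0 \<longrightarrow> (\<exists>i::nat. x = g ^ i))
      \<and> (\<forall>i. g ^ i = 1 \<longleftrightarrow> (card (UNIV::'a set) - 1) dvd i)"
proof -
  obtain g0 :: 'a where g0: "\<forall>x. x \<noteq> 0 \<longrightarrow> (\<exists>i::nat. x = g0 ^ i)"
    using gen_exists0 by blast
  define g where "g = (if g0 = 0 then 1 else g0)"
  have gnz: "g \<noteq> 0" by (simp add: g_def)
  have gen: "\<forall>x. x \<noteq> 0 \<longrightarrow> (\<exists>i::nat. x = g ^ i)"
  proof (intro allI impI)
    fix x :: 'a assume "x \<noteq> 0"
    then obtain i where i: "x = g0 ^ i" using g0 by blast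
    show "\<exists>i. x = g ^ i"
    proof (cases "g0 = 0")
      case True
      then have "x = 1" using i \<open>x \<noteq> 0\<close> by (cases i) auto
      then show ?thesis by (intro exI[of _ 0]) simp
    next
      case False
      then show ?thesis using i by (auto simp: g_def)
    qed
  qed
  define N where "N = card (UNIV::'a set) - 1"
  have Npos: "N > 0" using card_ge2[where 'a='a] by (simp add: N_def)
  have gN: "g ^ N = 1" using unit_pow_card[OF gnz] by (simp add: N_def)
  have ord: "g ^ i = 1 \<longleftrightarrow> N dvd i" for i
  proof
    assume "N dvd i"
    then obtain j where "i = N * j" by blast
    then show "g ^ i = 1" by (simp add: power_mult gN)
  next
    assume gi: "g ^ i = 1"
    define r where "r = i mod N"
    have "g ^ i = (g ^ N) ^ (i div N) * g ^ r"
      by (simp add: r_def power_mult[symmetric] power_add[symmetric])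
    then have gr: "g ^ r = 1" using gi gN by simp
    show "N dvd i"
    proof (rule ccontr)
      assume "\<not> N dvd i"
      then have rpos: "r > 0" by (simp add: r_def dvd_eq_mod_eq_0)
      have rlt: "r < N" using Npos by (simp add: r_def)
      have "UNIV - {0} \<subseteq> (\<lambda>j. g ^ j) ` {..<r}"
      proof
        fix x :: 'a assume "x \<in> UNIV - {0}"
        then obtain j where j: "x = g ^ j" using gen by blast
        have "g ^ j = (g ^ r) ^ (j div r) * g ^ (j mod r)"
          by (simp add: power_mult[symmetric] power_add[symmetric])
        then have "x = g ^ (j mod r)" using j gr by simp
        moreover have "j mod r < r" using rpos by simp
        ultimately show "x \<in> (\<lambda>j. g ^ j) ` {..<r}" by blast
      qed
      then have "card (UNIV - {0::'a}) \<le> card ((\<lambda>j. g ^ j) ` {..<r})"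
        by (rule card_mono[rotated]) simp
      also have "\<dots> \<le> r" using card_image_le[of "{..<r}" "\<lambda>j. g ^ j"] by simp
      finally show False using rlt card_nonzero[where 'a='a] by (simp add: N_def)
    qed
  qed
  show ?thesis using gnz gen ord by (auto simp: N_def)
qed

lemma pow_char:
  fixes z :: "'a::{finite,field}"
  assumes "e dvd (card (UNIV::'a set) - 1)" and "z \<noteq> 0"
  shows "(\<exists>y. z = y ^ e) \<longleftrightarrow> z ^ ((card (UNIV::'a set) - 1) div e) = 1"
proof -
  define N where "N = card (UNIV::'a set) - 1"
  have Npos: "N > 0" using card_ge2[where 'a='a] by (simp add: N_def)
  obtain g :: 'a where gnz: "g \<noteq> 0" and gen: "\<forall>x. x \<noteq> 0 \<longrightarrow> (\<exists>i::nat. x = g ^ i)"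
    and ord: "\<forall>i. g ^ i = 1 \<longleftrightarrow> N dvd i"
    using gen_exists[where 'a='a] unfolding N_def by blast
  obtain f where Nf: "N = e * f" using assms(1) unfolding N_def by blast
  have epos: "e > 0" and fpos: "f > 0" using Npos Nf by auto
  have fdiv: "N div e = f" using Nf epos by simp
  have fdiv': "(card (UNIV::'a set) - 1) div e = f" using fdiv by (simp add: N_def)
  show ?thesis
  proof
    assume "\<exists>y. z = y ^ e"
    then obtain y where y: "z = y ^ e" by blast
    have "y \<noteq> 0" using y assms(2) epos by auto
    then have "y ^ N = 1" using unit_pow_card by (simp add: N_def)
    then show "z ^ ((card (UNIV::'a set) - 1) div e) = 1"
      using y by (simp only: fdiv' power_mult[symmetric] Nf[symmetric])
  next
    assume h: "z ^ ((card (UNIV::'a set) - 1) div e) = 1"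
    obtain i where i: "z = g ^ i" using gen assms(2) by blast
    have "g ^ (i * f) = 1" using h i by (simp only: fdiv' power_mult)
    then have "N dvd i * f" using ord by blast
    then have "e * f dvd i * f" using Nf by simp
    then have "e dvd i" using fpos by simp
    then obtain j where "i = e * j" by blast
    then have "z = (g ^ j) ^ e" using i by (simp add: power_mult[symmetric] mult.commute)
    then show "\<exists>y. z = y ^ e" by blast
  qed
qed

lemma roots_card:
  fixes dummy :: "'a::{finite,field} itself"
  assumes "d dvd (card (UNIV::'a set) - 1)"
  shows "card {z::'a. z ^ d = 1} = d"
proof -
  define N where "N = card (UNIV::'a set) - 1"
  have Npos: "N > 0" using card_ge2[where 'a='a] by (simp add: N_def)
  obtain g :: 'a where gnz: "g \<noteq> 0"
    and ord: "\<forall>i. g ^ i = 1 \<longleftrightarrow> N dvd i"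
    using gen_exists[where 'a='a] unfolding N_def by blast
  obtain f where Nf: "N = d * f" using assms unfolding N_def by blast
  have dpos: "d > 0" and fpos: "f > 0" using Npos Nf by auto
  have le: "card {z::'a. z ^ d = 1} \<le> d"
  proof -
    have "card {z::'a. poly (monom 1 d - 1) z = 0} \<le> degree (monom (1::'a) d - 1)"
    proof (rule card_poly_roots_bound)
      show "monom (1::'a) d - 1 \<noteq> 0"
      proof
        assume "monom (1::'a) d - 1 = 0"
        then have "coeff (monom (1::'a) d - 1) d = 0" by simp
        then show False using dpos by simp
      qed
    qed
    moreover have "degree (monom (1::'a) d - 1) \<le> d"
      by (rule degree_diff_le) (auto simp: degree_monom_le)
    moreover have "{z::'a. poly (monom 1 d - 1) z = 0} = {z. z ^ d = 1}"
      by (simp add: poly_monom)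
    ultimately show ?thesis by simp
  qed
  have "inj_on (\<lambda>j. g ^ (f * j)) {..<d}"
  proof (rule inj_onI)
    fix j j' assume j: "j \<in> {..<d}" and j': "j' \<in> {..<d}" and eq: "g ^ (f * j) = g ^ (f * j')"
    have key: "j' \<le> j \<Longrightarrow> g ^ (f * j) = g ^ (f * j') \<Longrightarrow> j \<in> {..<d} \<Longrightarrow> j = j'" for j j'
    proof -
      assume le: "j' \<le> j" and e: "g ^ (f * j) = g ^ (f * j')" and jd: "j \<in> {..<d}"
      have "g ^ (f * j) = g ^ (f * (j - j')) * g ^ (f * j')"
        using le by (simp add: power_add[symmetric] diff_mult_distrib2)
      then have "g ^ (f * (j - j')) = 1" using e gnz by simp
      then have "d * f dvd f * (j - j')" using ord Nf by simp
      then have "d dvd j - j'" using fpos by (simp add: mult.commute)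
      moreover have "j - j' < d" using jd by auto
      ultimately have "j - j' = 0" using dvd_imp_le by (cases "j - j' = 0") auto
      then show "j = j'" using le by simp
    qed
    show "j = j'"
    proof (cases "j' \<le> j")
      case True then show ?thesis using key eq j by blast
    next
      case False then show ?thesis using key[of j j'] eq j' by auto
    qed
  qed
  then have "card ((\<lambda>j. g ^ (f * j)) ` {..<d}) = d" by (simp add: card_image)
  moreover have "(\<lambda>j. g ^ (f * j)) ` {..<d} \<subseteq> {z::'a. z ^ d = 1}"
  proof
    fix z assume "z \<in> (\<lambda>j. g ^ (f * j)) ` {..<d}"
    then obtain j where "z = g ^ (f * j)" by blast
    then have "z ^ d = g ^ (N * j)" using Nf by (simp add: power_mult[symmetric] mult.commute mult.left_commute)
    then show "z \<in> {z. z ^ d = 1}" using ord by simp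
  qed
  ultimately have "d \<le> card {z::'a. z ^ d = 1}"
    by (metis card_mono finite)
  then show ?thesis using le by simp
qed


lemma card_times_zero:
  fixes y :: "'a::{finite,field}"
  shows "of_nat (card (UNIV::'a set)) * y = 0"
proof -
  have bij: "bij_betw (\<lambda>x. x + y) UNIV (UNIV::'a set)"
  proof (rule bij_betwI[where g="\<lambda>x. x - y"])
  qed auto
  have "(\<Sum>x\<in>UNIV. x + y) = (\<Sum>x\<in>(UNIV::'a set). x)"
    using sum.reindex_bij_betw[OF bij, of "\<lambda>x. x"] by simp
  moreover have "(\<Sum>x\<in>UNIV. x + y) = (\<Sum>x\<in>(UNIV::'a set). x) + of_nat (card (UNIV::'a set)) * y"
    by (simp add: sum.distrib)
  ultimately show ?thesis by simp
qed

lemma char_p: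
  assumes "prime p" "n > 0" "card (UNIV::'a::{finite,field} set) = p ^ n"
  shows "of_nat p = (0::'a)"
proof -
  have "of_nat (p ^ n) * (1::'a) = 0" using card_times_zero[of "1::'a"] assms(3) by simp
  then have "(of_nat p :: 'a) ^ n = 0" by simp
  then show ?thesis by simp
qed

lemma of_int_dvd_zero:
  assumes "of_nat p = (0::'a::ring_1)" "int p dvd z"
  shows "of_int z = (0::'a)"
proof -
  obtain w where "z = int p * w" using assms(2) by blast
  then show ?thesis using assms(1) by simp
qed

lemma S0: "sum_of_kth_powers k 0 x \<longleftrightarrow> x = 0"
  by (simp add: sum_of_kth_powers_def)

lemma S_suc: "sum_of_kth_powers k (Suc s) z \<longleftrightarrow> (\<exists>x y. sum_of_kth_powers k s x \<and> z = x + y ^ k)"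
proof
  assume "sum_of_kth_powers k (Suc s) z"
  then obtain f where "z = (\<Sum>i<Suc s. f i ^ k)" by (auto simp: sum_of_kth_powers_def)
  then have "z = (\<Sum>i<s. f i ^ k) + f s ^ k" by simp
  then show "\<exists>x y. sum_of_kth_powers k s x \<and> z = x + y ^ k"
    unfolding sum_of_kth_powers_def by blast
next
  assume "\<exists>x y. sum_of_kth_powers k s x \<and> z = x + y ^ k"
  then obtain f y where z: "z = (\<Sum>i<s. f i ^ k) + y ^ k" by (auto simp: sum_of_kth_powers_def)
  define f' where "f' = f(s := y)"
  have "(\<Sum>i<s. f i ^ k) = (\<Sum>i<s. f' i ^ k)" by (rule sum.cong) (auto simp: f'_def)
  then have "z = (\<Sum>i<Suc s. f' i ^ k)" using z by (simp add: f'_def)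
  then show "sum_of_kth_powers k (Suc s) z" unfolding sum_of_kth_powers_def by blast
qed

lemma S_one: "sum_of_kth_powers k 1 (y ^ k)"
  unfolding One_nat_def S_suc by (intro exI[of _ 0] exI[of _ y]) (simp add: S0)

lemma S_add: "sum_of_kth_powers k i x \<Longrightarrow> sum_of_kth_powers k j y \<Longrightarrow> sum_of_kth_powers k (i + j) (x + y)"
proof (induction j arbitrary: y)
  case 0
  then show ?case by (simp add: S0)
next
  case (Suc j)
  then obtain y' w where y': "sum_of_kth_powers k j y'" "y = y' + w ^ k" by (auto simp: S_suc)
  then have "sum_of_kth_powers k (i + j) (x + y')" using Suc by blast
  then show ?case using y' unfolding add_Suc_right S_suc
    by (intro exI[of _ "x + y'"] exI[of _ w]) (simp add: add.assoc)
qed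

lemma S_zero: "k > 0 \<Longrightarrow> sum_of_kth_powers k j 0"
proof (induction j)
  case 0 then show ?case by (simp add: S0)
next
  case (Suc j) then show ?case by (auto simp: S_suc intro!: exI[of _ 0])
qed

lemma S_mono: "k > 0 \<Longrightarrow> sum_of_kth_powers k i x \<Longrightarrow> i \<le> j \<Longrightarrow> sum_of_kth_powers k j x"
  using S_add[of k i x "j - i" 0] S_zero[of k "j - i"] by simp

lemma S_mult: "sum_of_kth_powers k i x \<Longrightarrow> sum_of_kth_powers k i (x * y ^ k)"
proof -
  assume "sum_of_kth_powers k i x"
  then obtain f where "x = (\<Sum>l<i. f l ^ k)" by (auto simp: sum_of_kth_powers_def)
  then have "x * y ^ k = (\<Sum>l<i. (f l * y) ^ k)" by (simp add: sum_distrib_right power_mult_distrib)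
  then show ?thesis unfolding sum_of_kth_powers_def by (intro exI[of _ "\<lambda>l. f l * y"]) simp
qed

lemma S_mult2: "sum_of_kth_powers k i x \<Longrightarrow> sum_of_kth_powers k j y \<Longrightarrow> sum_of_kth_powers k (i * j) (x * y)"
proof (induction j arbitrary: y)
  case 0
  then show ?case by (simp add: S0)
next
  case (Suc j)
  then obtain y' w where y': "sum_of_kth_powers k j y'" "y = y' + w ^ k" by (auto simp: S_suc)
  then have "sum_of_kth_powers k (i * j) (x * y')" using Suc by blast
  moreover have "sum_of_kth_powers k i (x * w ^ k)" using S_mult Suc by blast
  ultimately have "sum_of_kth_powers k (i * j + i) (x * y' + x * w ^ k)" by (rule S_add)
  then show ?case using y' by (simp add: algebra_simps)
qed

lemma S_hom:
  assumes add: "\<And>x y. \<phi> (x + y) = \<phi> x + \<phi> y" and z: "\<phi> 0 = 0"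
  shows "sum_of_kth_powers k s u \<Longrightarrow> \<exists>f. \<phi> u = (\<Sum>l<s. \<phi> (f l ^ k))"
proof (induction s arbitrary: u)
  case 0 then show ?case by (simp add: S0 z)
next
  case (Suc s)
  then obtain x y where xy: "sum_of_kth_powers k s x" "u = x + y ^ k" by (auto simp: S_suc)
  then obtain f where f: "\<phi> x = (\<Sum>l<s. \<phi> (f l ^ k))" using Suc by blast
  define f' where "f' = f(s := y)"
  have "(\<Sum>l<s. \<phi> (f l ^ k)) = (\<Sum>l<s. \<phi> (f' l ^ k))" by (rule sum.cong) (auto simp: f'_def)
  then have "\<phi> u = (\<Sum>l<Suc s. \<phi> (f' l ^ k))" using xy f add by (simp add: f'_def)
  then show ?case by blast
qed


definition ev :: "int poly \<Rightarrow> 'a::comm_ring_1 \<Rightarrow> 'a" where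
  "ev f x = poly (map_poly of_int f) x"

lemma mp_add: "map_poly (of_int :: int \<Rightarrow> 'a::comm_ring_1) (f + g) = map_poly of_int f + map_poly of_int g"
  by (rule poly_eqI) (simp add: coeff_map_poly)

lemma mp_diff: "map_poly (of_int :: int \<Rightarrow> 'a::comm_ring_1) (f - g) = map_poly of_int f - map_poly of_int g"
  by (rule poly_eqI) (simp add: coeff_map_poly)

lemma mp_mult: "map_poly (of_int :: int \<Rightarrow> 'a::comm_ring_1) (f * g) = map_poly of_int f * map_poly of_int g"
  by (rule poly_eqI) (simp add: coeff_map_poly coeff_mult)

lemma mp_smult: "map_poly (of_int :: int \<Rightarrow> 'a::comm_ring_1) (smult u f) = smult (of_int u) (map_poly of_int f)"
  by (rule poly_eqI) (simp add: coeff_map_poly)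

lemma ev_add: "ev (f + g) x = ev f x + ev g x" by (simp add: ev_def mp_add)
lemma ev_diff: "ev (f - g) x = ev f x - ev g x" by (simp add: ev_def mp_diff)
lemma ev_mult: "ev (f * g) x = ev f x * ev g x" by (simp add: ev_def mp_mult)
lemma ev_smult: "ev (smult u f) x = of_int u * ev f x" by (simp add: ev_def mp_smult)
lemma ev_monom: "ev (monom c i) x = of_int c * x ^ i" by (simp add: ev_def map_poly_monom poly_monom)
lemma ev_1: "ev 1 x = 1" by (simp add: ev_def)
lemma ev_0: "ev 0 x = 0" by (simp add: ev_def)

lemma mp_p:
  assumes "of_nat p = (0::'a::comm_ring_1)" "\<forall>i. int p dvd coeff f i"
  shows "map_poly (of_int :: int \<Rightarrow> 'a) f = 0"
  by (rule poly_eqI) (simp add: coeff_map_poly of_int_dvd_zero[OF assms(1)] assms(2))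

lemma ev_p:
  assumes "of_nat p = (0::'a::comm_ring_1)" "\<forall>i. int p dvd coeff f i"
  shows "ev f (x::'a) = 0"
  using mp_p[OF assms] by (simp add: ev_def)

lemma modp:
  fixes \<alpha> :: "'a::field"
  assumes p: "prime p" and pa: "of_nat p = (0::'a)"
    and minm: "\<And>g. lead_coeff g = 1 \<Longrightarrow> ev g \<alpha> = 0 \<Longrightarrow> d \<le> degree g"
    and r: "r = 0 \<or> degree r < d" and er: "ev r \<alpha> = 0"
  shows "\<forall>i. int p dvd coeff r i"
proof (rule ccontr)
  assume "\<not> (\<forall>i. int p dvd coeff r i)"
  define J where "J = {i. \<not> int p dvd coeff r i}"
  have Jne: "J \<noteq> {}" using \<open>\<not> (\<forall>i. _)\<close> by (auto simp: J_def)
  have Jsub: "J \<subseteq> {..degree r}"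
  proof
    fix i assume "i \<in> J"
    then have "coeff r i \<noteq> 0" by (auto simp: J_def)
    then show "i \<in> {..degree r}" using le_degree by auto
  qed
  have Jfin: "finite J" using Jsub finite_subset by blast
  define j where "j = Max J"
  have jJ: "j \<in> J" using Jfin Jne by (simp add: j_def)
  have jmax: "i > j \<Longrightarrow> int p dvd coeff r i" for i
    using Max_ge[OF Jfin, of i] by (auto simp: J_def j_def)
  have rnz: "r \<noteq> 0" using jJ by (auto simp: J_def)
  have jle: "j \<le> degree r" using jJ Jsub by auto
  have jd: "j < d" using r rnz jle by auto
  define c where "c = coeff r j"
  have "\<not> int p dvd c" using jJ by (simp add: J_def c_def)
  moreover have "prime (int p)" using p by simp
  ultimately have "coprime c (int p)"
    using prime_imp_coprime[of "int p" c] by (simp add: coprime_commute)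
  then obtain u v where uv: "u * c + v * int p = 1"
    using bezout_int[of c "int p"] by (metis coprime_commute coprime_iff_gcd_eq_1 gcd.commute)
  define g :: "int poly" where "g = (\<Sum>i\<le>j. monom (if i = j then 1 else u * coeff r i) i)"
  have cg: "coeff g i = (if i \<le> j then (if i = j then 1 else u * coeff r i) else 0)" for i
    unfolding g_def coeff_sum by (simp add: coeff_monom)
  have degg: "degree g \<le> j"
    by (rule degree_le) (auto simp: cg)
  have "j \<le> degree g" by (rule le_degree) (simp add: cg)
  then have dg: "degree g = j" using degg by simp
  have lg: "lead_coeff g = 1" using dg cg by simp
  have "\<forall>i. int p dvd coeff (g - smult u r) i"
  proof
    fix i
    show "int p dvd coeff (g - smult u r) i"
    proof (cases "i \<le> j")
      case True
      show ?thesis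
      proof (cases "i = j")
        case True
        then have "coeff (g - smult u r) i = 1 - u * c" using cg by (simp add: c_def)
        also have "\<dots> = v * int p" using uv by (simp add: algebra_simps)
        finally show ?thesis by simp
      next
        case False
        then show ?thesis using \<open>i \<le> j\<close> cg by simp
      qed
    next
      case False
      then have "coeff (g - smult u r) i = - (u * coeff r i)" using cg by simp
      moreover have "int p dvd coeff r i" using False jmax by simp
      ultimately show ?thesis by simp
    qed
  qed
  then have "ev (g - smult u r) \<alpha> = 0" by (rule ev_p[OF pa])
  then have "ev g \<alpha> = 0" using er by (simp add: ev_diff ev_smult)
  then have "d \<le> degree g" using minm lg by blast
  then show False using dg jd by simp
qed

lemma embedding:
  assumes p: "prime p"
    and pa: "of_nat p = (0::'a::{finite,field})" and pb: "of_nat p = (0::'b::{finite,field})"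
    and dv: "(card (UNIV::'a set) - 1) dvd (card (UNIV::'b set) - 1)"
  shows "\<exists>\<phi>::'a \<Rightarrow> 'b. (\<forall>x y. \<phi> (x + y) = \<phi> x + \<phi> y) \<and> (\<forall>x y. \<phi> (x * y) = \<phi> x * \<phi> y)
           \<and> \<phi> 1 = 1 \<and> inj \<phi>"
proof -
  define q where "q = card (UNIV::'a set)"
  have q2: "q \<ge> 2" using card_ge2[where 'a='a] by (simp add: q_def)
  obtain \<alpha> :: 'a where anz: "\<alpha> \<noteq> 0" and agen: "\<forall>x. x \<noteq> 0 \<longrightarrow> (\<exists>i::nat. x = \<alpha> ^ i)"
    and aord: "\<forall>i. \<alpha> ^ i = 1 \<longleftrightarrow> (q - 1) dvd i"
    using gen_exists[where 'a='a] unfolding q_def by blast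
  have aq: "\<alpha> ^ q = \<alpha>"
  proof -
    have "\<alpha> ^ (q - 1) = 1" using aord by simp
    then have "\<alpha> ^ (Suc (q - 1)) = \<alpha>" by simp
    moreover have "Suc (q - 1) = q" using q2 by simp
    ultimately show ?thesis by simp
  qed
  define M :: "int poly" where "M = monom 1 q - monom 1 1"
  have cM: "coeff M i = (if i = q then 1 else if i = 1 then -1 else 0)" for i
    using q2 by (simp add: M_def)
  have dM: "degree M = q"
  proof -
    have "degree M \<le> q" by (rule degree_le) (use q2 in \<open>auto simp: cM\<close>)
    moreover have "q \<le> degree M" by (rule le_degree) (simp add: cM)
    ultimately show ?thesis by simp
  qed
  have lM: "lead_coeff M = 1" using dM cM by simp
  have eM: "ev M \<alpha> = 0" using aq by (simp add: M_def ev_diff ev_monom)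
  define S where "S = {f :: int poly. lead_coeff f = 1 \<and> ev f \<alpha> = 0}"
  define d where "d = (LEAST n. \<exists>f\<in>S. degree f = n)"
  have "\<exists>f\<in>S. degree f = d"
    unfolding d_def by (rule LeastI[of _ q]) (rule bexI[of _ M], use lM eM dM in \<open>auto simp: S_def\<close>)
  then obtain m where mS: "m \<in> S" and dm: "degree m = d" by blast
  have lm: "lead_coeff m = 1" and em: "ev m \<alpha> = 0" using mS by (auto simp: S_def)
  have minm: "\<And>g. lead_coeff g = 1 \<Longrightarrow> ev g \<alpha> = 0 \<Longrightarrow> d \<le> degree g"
    unfolding d_def by (rule Least_le) (auto simp: S_def)
  have mnz: "m \<noteq> 0" using lm by auto
  have dpos: "d > 0"
  proof (rule ccontr)
    assume "\<not> d > 0"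
    then have "degree m = 0" using dm by simp
    then have "m = [:1:]" using lm by (auto elim!: degree_eq_zeroE)
    then have "m = 1" by (simp add: one_pCons)
    then show False using em by (simp add: ev_1)
  qed
  have key: "ev f \<beta> = 0" if eb: "ev m \<beta> = 0" and ef: "ev f \<alpha> = 0" and pc: "of_nat p = (0::'c::field)"
    for f and \<beta> :: "'c::field"
  proof -
    obtain h r where hr: "pseudo_divmod f m = (h, r)" by (cases "pseudo_divmod f m") auto
    from pseudo_divmod[OF mnz hr] lm have fe: "f = m * h + r" and rd: "r = 0 \<or> degree r < degree m"
      by auto
    have "ev r \<alpha> = 0" using fe ef em by (simp add: ev_add ev_mult)
    then have "\<forall>i. int p dvd coeff r i" using modp[OF p pa minm] rd dm by blast
    then have "ev r \<beta> = 0" by (rule ev_p[OF pc])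
    then show ?thesis using fe eb by (simp add: ev_add ev_mult)
  qed
  have "\<exists>\<beta>::'b. ev m \<beta> = 0"
  proof (rule ccontr)
    assume nr: "\<not> (\<exists>\<beta>::'b. ev m \<beta> = 0)"
    obtain h r where hr: "pseudo_divmod M m = (h, r)" by (cases "pseudo_divmod M m") auto
    from pseudo_divmod[OF mnz hr] lm have fe: "M = m * h + r" and rd: "r = 0 \<or> degree r < degree m"
      by auto
    have "ev r \<alpha> = 0" using fe eM em by (simp add: ev_add ev_mult)
    then have "\<forall>i. int p dvd coeff r i" using modp[OF p pa minm] rd dm by blast
    then have r0: "map_poly (of_int :: int \<Rightarrow> 'b) r = 0" by (rule mp_p[OF pb])
    define mb where "mb = map_poly (of_int :: int \<Rightarrow> 'b) m"
    define hb where "hb = map_poly (of_int :: int \<Rightarrow> 'b) h"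
    define Mb where "Mb = map_poly (of_int :: int \<Rightarrow> 'b) M"
    have Mbe: "Mb = mb * hb" using fe r0 by (simp add: Mb_def mb_def hb_def mp_add mp_mult)
    have dMb: "degree Mb = q" unfolding Mb_def by (subst map_poly_degree_eq) (simp_all add: dM cM)
    have dmb: "degree mb = d" unfolding mb_def by (subst map_poly_degree_eq) (use lm dm in simp_all)
    have Mbnz: "Mb \<noteq> 0"
    proof
      assume "Mb = 0"
      then have "coeff Mb q = 0" by simp
      then show False by (simp add: Mb_def coeff_map_poly cM)
    qed
    have hbnz: "hb \<noteq> 0" using Mbnz Mbe by auto
    have mbnz: "mb \<noteq> 0" using Mbnz Mbe by auto
    have "degree Mb = degree mb + degree hb" using Mbe hbnz mbnz by (simp add: degree_mult_eq)
    then have dhb: "degree hb < q" using dMb dmb dpos by simp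
    define Fb where "Fb = {y::'b. y ^ q = y}"
    have Fsub: "Fb \<subseteq> {y. poly hb y = 0}"
    proof
      fix y assume "y \<in> Fb"
      then have "poly Mb y = 0" by (simp add: Fb_def Mb_def M_def mp_diff map_poly_monom poly_monom)
      moreover have "poly mb y \<noteq> 0" using nr by (simp add: mb_def ev_def)
      ultimately show "y \<in> {y. poly hb y = 0}" using Mbe by simp
    qed
    have "card {z::'b. z ^ (q - 1) = 1} = q - 1" using roots_card[OF dv[folded q_def]] by simp
    moreover have "insert 0 {z::'b. z ^ (q - 1) = 1} \<subseteq> Fb"
    proof
      fix z :: 'b assume "z \<in> insert 0 {z. z ^ (q - 1) = 1}"
      then have zz: "z = 0 \<or> z ^ (q - 1) = 1" by simp
      have "z ^ q = z * z ^ (q - 1)" using power_Suc[of z "q-1"] q2 by simp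
      then show "z \<in> Fb" unfolding Fb_def using zz q2 by auto
    qed
    moreover have "(0::'b) \<notin> {z::'b. z ^ (q - 1) = 1}"
    proof -
      have "q - 1 \<noteq> 0" using q2 by simp
      then show ?thesis by (simp add: zero_power)
    qed
    ultimately have "card (insert 0 {z::'b. z ^ (q - 1) = 1}) = q" "insert 0 {z::'b. z ^ (q - 1) = 1} \<subseteq> Fb"
      using q2 by (simp_all add: card_insert_disjoint)
    then have "q \<le> card Fb" by (metis card_mono finite)
    also have "\<dots> \<le> card {y. poly hb y = 0}" using Fsub by (rule card_mono[rotated]) simp
    also have "\<dots> \<le> degree hb" using hbnz by (rule card_poly_roots_bound)
    finally show False using dhb by simp
  qed
  then obtain \<beta> :: 'b where eb: "ev m \<beta> = 0" by blast
  have surj_ev: "\<exists>f. ev f \<alpha> = x" for x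
  proof (cases "x = 0")
    case True then show ?thesis by (intro exI[of _ 0]) (simp add: ev_0)
  next
    case False
    then obtain i where "x = \<alpha> ^ i" using agen by blast
    then show ?thesis by (intro exI[of _ "monom 1 i"]) (simp add: ev_monom)
  qed
  define \<phi> where "\<phi> x = ev (SOME f. ev f \<alpha> = x) \<beta>" for x
  have wd: "\<phi> x = ev f \<beta>" if "ev f \<alpha> = x" for f x
  proof -
    define f0 where "f0 = (SOME f. ev f \<alpha> = x)"
    have "ev f0 \<alpha> = x" unfolding f0_def using surj_ev by (rule someI_ex)
    then have "ev (f - f0) \<alpha> = 0" using that by (simp add: ev_diff)
    then have "ev (f - f0) \<beta> = 0" using key[OF eb _ pb] by blast
    then show ?thesis by (simp add: \<phi>_def f0_def[symmetric] ev_diff)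
  qed
  have ph: "\<exists>f. ev f \<alpha> = x \<and> \<phi> x = ev f \<beta>" for x
    using surj_ev wd by blast
  have padd: "\<phi> (x + y) = \<phi> x + \<phi> y" for x y
  proof -
    obtain f g where "ev f \<alpha> = x" "\<phi> x = ev f \<beta>" "ev g \<alpha> = y" "\<phi> y = ev g \<beta>" using ph by metis
    then show ?thesis using wd[of "f + g" "x + y"] by (simp add: ev_add)
  qed
  have pmult: "\<phi> (x * y) = \<phi> x * \<phi> y" for x y
  proof -
    obtain f g where "ev f \<alpha> = x" "\<phi> x = ev f \<beta>" "ev g \<alpha> = y" "\<phi> y = ev g \<beta>" using ph by metis
    then show ?thesis using wd[of "f * g" "x * y"] by (simp add: ev_mult)
  qed
  have p1: "\<phi> 1 = 1" using wd[of 1 1] by (simp add: ev_1)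
  have "inj \<phi>"
  proof (rule injI)
    fix x y assume e: "\<phi> x = \<phi> y"
    have "\<phi> (x - y) + \<phi> y = \<phi> x" using padd[of "x - y" y] by simp
    then have z: "\<phi> (x - y) = 0" using e by simp
    show "x = y"
    proof (rule ccontr)
      assume "x \<noteq> y"
      then have "1 = (x - y) * inverse (x - y)" by simp
      then have "\<phi> 1 = \<phi> (x - y) * \<phi> (inverse (x - y))" using pmult by metis
      then show False using z p1 by simp
    qed
  qed
  then show ?thesis using padd pmult p1 by blast
qed


lemma sub_unit_pow:
  fixes L :: "'a::{finite,field} set"
  assumes closed: "\<And>x y. x \<in> L \<Longrightarrow> y \<in> L \<Longrightarrow> x * y \<in> L" and yL: "y \<in> L" and ynz: "y \<noteq> 0"
  shows "y ^ card (L - {0}) = 1"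
proof -
  let ?U = "L - {0}"
  have sub: "(\<lambda>x. y * x) ` ?U \<subseteq> ?U" using closed yL ynz by auto
  have inj: "inj_on (\<lambda>x. y * x) ?U" using ynz by (auto simp: inj_on_def)
  have "card ((\<lambda>x. y * x) ` ?U) = card ?U" using inj by (rule card_image)
  then have eq: "(\<lambda>x. y * x) ` ?U = ?U" using sub by (intro card_subset_eq) auto
  have bij: "bij_betw (\<lambda>x. y * x) ?U ?U" using inj eq by (simp add: bij_betw_def)
  have "(\<Prod>x\<in>?U. y * x) = (\<Prod>x\<in>?U. x)"
    using prod.reindex_bij_betw[OF bij, of "\<lambda>x. x"] by simp
  moreover have "(\<Prod>x\<in>?U. y * x) = y ^ card ?U * (\<Prod>x\<in>?U. x)"
    by (simp add: prod.distrib)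
  moreover have "(\<Prod>x\<in>?U. x) \<noteq> 0" by simp
  ultimately show ?thesis by simp
qed

lemma lagrange_add:
  fixes L :: "'a::{finite,ab_group_add} set"
  assumes add: "\<And>x y. x \<in> L \<Longrightarrow> y \<in> L \<Longrightarrow> x + y \<in> L" and neg: "\<And>x. x \<in> L \<Longrightarrow> - x \<in> L"
    and z: "0 \<in> L"
  shows "card L dvd card (UNIV::'a set)"
proof -
  define C where "C = range (\<lambda>x. (\<lambda>y. x + y) ` L)"
  have trans: "(\<lambda>y. t + y) ` L = L" if "t \<in> L" for t
  proof
    show "(\<lambda>y. t + y) ` L \<subseteq> L"
    proof
      fix w assume "w \<in> (\<lambda>y. t + y) ` L"
      then obtain y where "y \<in> L" "w = t + y" by blast
      then show "w \<in> L" using add[OF that] by simp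
    qed
    show "L \<subseteq> (\<lambda>y. t + y) ` L"
    proof
      fix w assume "w \<in> L"
      have "w - t \<in> L" using add[OF \<open>w \<in> L\<close> neg[OF that]] by (simp only: diff_conv_add_uminus)
      moreover have "w = t + (w - t)" by simp
      ultimately show "w \<in> (\<lambda>y. t + y) ` L" by blast
    qed
  qed
  have U: "\<Union>C = UNIV"
  proof -
    have "x \<in> (\<lambda>y. x + y) ` L" for x using z by force
    then show ?thesis by (auto simp: C_def)
  qed
  have cards: "\<forall>c\<in>C. card c = card L"
    by (auto simp: C_def card_image inj_on_def)
  have disj: "\<forall>c1\<in>C. \<forall>c2\<in>C. c1 \<noteq> c2 \<longrightarrow> c1 \<inter> c2 = {}"
  proof (intro ballI impI)
    fix c1 c2 assume c1: "c1 \<in> C" and c2: "c2 \<in> C" and ne: "c1 \<noteq> c2"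
    obtain x1 where x1: "c1 = (\<lambda>y. x1 + y) ` L" using c1 by (auto simp: C_def)
    obtain x2 where x2: "c2 = (\<lambda>y. x2 + y) ` L" using c2 by (auto simp: C_def)
    show "c1 \<inter> c2 = {}"
    proof (rule ccontr)
      assume "c1 \<inter> c2 \<noteq> {}"
      then obtain l1 l2 where l: "l1 \<in> L" "l2 \<in> L" "x1 + l1 = x2 + l2" using x1 x2 by auto
      have tL: "l1 - l2 \<in> L" using add[OF l(1) neg[OF l(2)]] by (simp only: diff_conv_add_uminus)
      have "x2 = x1 + (l1 - l2)" using l by (simp add: algebra_simps)
      then have "c2 = (\<lambda>y. x1 + y) ` ((\<lambda>y. (l1 - l2) + y) ` L)" using x2 by (simp add: image_image add.assoc)
      then have "c2 = c1" using trans[OF tL] x1 by simp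
      then show False using ne by simp
    qed
  qed
  have "card L * card C = card (\<Union>C)"
    by (rule card_partition) (use cards disj in auto)
  then show ?thesis using U by (metis dvd_triv_left)
qed

lemma waring_exists:
  fixes dummy :: "'a::{finite,field} itself"
  assumes p: "prime p" and a: "a > 0" and c: "c > 0"
    and pd: "primitive_divisor c p a"
    and card: "card (UNIV :: 'a set) = p ^ a"
    and k: "k = (p ^ a - 1) div c" and kpos: "k > 0"
  shows "\<exists>s. \<forall>x::'a. sum_of_kth_powers k s x"
proof -
  define L where "L = {x::'a. \<exists>s. sum_of_kth_powers k s x}"
  have Ladd: "x + y \<in> L" if "x \<in> L" "y \<in> L" for x y
    using that S_add unfolding L_def by blast
  have Lmult: "x * y \<in> L" if "x \<in> L" "y \<in> L" for x y
    using that S_mult2 unfolding L_def by blast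
  have L0: "0 \<in> L" unfolding L_def using S0 by blast
  have Lpow: "y ^ k \<in> L" for y unfolding L_def using S_one by blast
  have L1: "1 \<in> L" using Lpow[of 1] by simp
  have Lnat: "of_nat n \<in> L" for n
    by (induction n) (use L0 L1 Ladd in auto)
  have pa: "of_nat p = (0::'a)" using char_p[OF p a card] .
  have m1: "(of_nat (p - 1) :: 'a) = - 1"
  proof -
    have "p \<ge> 1" using prime_gt_1_nat[OF p] by simp
    then have "(of_nat (p - 1) :: 'a) + 1 = of_nat p" by (simp add: of_nat_diff)
    then show ?thesis using pa by (simp add: eq_neg_iff_add_eq_0)
  qed
  have Lneg: "- x \<in> L" if "x \<in> L" for x
  proof -
    have "- x = x * of_nat (p - 1)" using m1 by simp
    then show ?thesis using Lmult[OF that Lnat] by simp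
  qed
  have "L = UNIV"
  proof (rule ccontr)
    assume LU: "L \<noteq> UNIV"
    have "card L dvd p ^ a" using lagrange_add[OF Ladd Lneg L0] card by simp
    then obtain t where t: "t \<le> a" "card L = p ^ t" using divides_primepow_nat[OF p] by blast
    have "card L < card (UNIV::'a set)" using LU by (intro psubset_card_mono) auto
    then have "t \<noteq> a" using t card by auto
    then have ta: "t < a" using t by simp
    have "card {0::'a, 1} \<le> card L" using L0 L1 by (intro card_mono) auto
    then have "t \<ge> 1" using t by (cases t) auto
    obtain \<gamma> :: 'a where gnz: "\<gamma> \<noteq> 0" and ord: "\<forall>i. \<gamma> ^ i = 1 \<longleftrightarrow> (card (UNIV::'a set) - 1) dvd i"
      using gen_exists[where 'a='a] by blast
    have cdv: "c dvd p ^ a - 1" using pd by (simp add: primitive_divisor_def)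
    have kc: "p ^ a - 1 = k * c" using cdv k by simp
    define \<zeta> where "\<zeta> = \<gamma> ^ k"
    have zL: "\<zeta> \<in> L" using Lpow by (simp add: \<zeta>_def)
    have znz: "\<zeta> \<noteq> 0" using gnz by (simp add: \<zeta>_def)
    have "\<zeta> ^ card (L - {0}) = 1" by (rule sub_unit_pow[OF Lmult zL znz])
    moreover have "card (L - {0}) = p ^ t - 1" using L0 t by (simp add: card_Diff_singleton)
    ultimately have "\<gamma> ^ (k * (p ^ t - 1)) = 1" by (simp add: \<zeta>_def power_mult)
    then have "k * c dvd k * (p ^ t - 1)" using ord card kc by simp
    then have "c dvd p ^ t - 1" using kpos by simp
    then show False using pd \<open>t \<ge> 1\<close> ta by (auto simp: primitive_divisor_def)
  qed
  then have ex: "\<forall>x::'a. \<exists>s. sum_of_kth_powers k s x" by (auto simp: L_def)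
  define sf where "sf x = (SOME s. sum_of_kth_powers k s x)" for x :: 'a
  define s0 where "s0 = Max (range sf)"
  have "sum_of_kth_powers k s0 x" for x :: 'a
  proof -
    have "sum_of_kth_powers k (sf x) x" unfolding sf_def by (rule someI_ex) (use ex in blast)
    moreover have "sf x \<le> s0" unfolding s0_def by (rule Max_ge) auto
    ultimately show ?thesis using S_mono kpos by blast
  qed
  then show ?thesis by blast
qed


theorem mainTheorem8:
  fixes p a c :: nat
  assumes "prime p" and "odd p" and "a > 0" and "c > 0"
    and "primitive_divisor c p a"
    and "odd ((p ^ a - 1) div c)"
    and "card (UNIV :: ('a::{finite,field}) set) = p ^ a"
    and "card (UNIV :: ('b::{finite,field}) set) = p ^ (2 * a)"
  shows "waring_number ((p ^ (2 * a) - 1) div (2 * c)) TYPE('b)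
           = 2 * waring_number ((p ^ a - 1) div c) TYPE('a)"
proof -
  note p = assms(1) and podd = assms(2) and apos = assms(3) and cpos = assms(4)
    and pd = assms(5) and kodd = assms(6) and cardA = assms(7) and cardB = assms(8)
  define q where "q = p ^ a"
  define k where "k = (p ^ a - 1) div c"
  define K where "K = (p ^ (2 * a) - 1) div (2 * c)"
  have p2: "p \<ge> 2" using prime_ge_2_nat[OF p] .
  have p3: "p \<ge> 3" using p2 podd by (cases "p = 2") auto
  have qp: "q \<ge> p" unfolding q_def using apos p2 by (simp add: self_le_power)
  have q3: "q \<ge> 3" using qp p3 by simp
  have qodd: "odd q" unfolding q_def using podd by simp
  have cA: "card (UNIV::'a set) = q" using cardA by (simp add: q_def)
  have cB: "card (UNIV::'b set) = q * q" using cardB by (simp add: q_def power_mult power2_eq_square mult.commute)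
  have cdv: "c dvd q - 1" using pd by (simp add: primitive_divisor_def q_def)
  have kc: "q - 1 = k * c" using cdv by (simp add: k_def q_def)
  have kpos: "k > 0" using odd_pos[OF kodd] by (simp add: k_def)
  obtain r where r: "q + 1 = 2 * r" using qodd by (metis dvd_def odd_even_add odd_one)
  have qq: "q * q - 1 = (q - 1) * (q + 1)"
  proof -
    obtain q0 where "q = Suc q0" using q3 by (cases q) auto
    then show ?thesis by (simp add: algebra_simps)
  qed
  have NB: "q * q - 1 = 2 * c * (k * r)" unfolding qq kc r by (simp add: algebra_simps)
  have Kdef: "K = k * r"
  proof -
    have "p ^ (2 * a) - 1 = q * q - 1" by (simp add: q_def power_mult power2_eq_square mult.commute)
    then show ?thesis using NB cpos by (simp add: K_def)
  qed
  have rpos: "r > 0" using r by auto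
  have Kpos: "K > 0" using Kdef kpos rpos by simp
  have pa: "of_nat p = (0::'a)" using char_p[OF p apos cardA] .
  have pb: "of_nat p = (0::'b)" using char_p[OF p _ cardB] apos by simp
  have dv: "(card (UNIV::'a set) - 1) dvd (card (UNIV::'b set) - 1)"
    using cA cB qq by simp
  obtain \<phi> :: "'a \<Rightarrow> 'b" where padd: "\<And>x y. \<phi> (x + y) = \<phi> x + \<phi> y"
    and pmult: "\<And>x y. \<phi> (x * y) = \<phi> x * \<phi> y" and p1: "\<phi> 1 = 1" and pinj: "inj \<phi>"
    using embedding[OF p pa pb dv] by blast
  have p0: "\<phi> 0 = 0"
  proof -
    have "\<phi> 0 + \<phi> 0 = \<phi> 0 + 0" using padd[of 0 0] by simp
    then show ?thesis by (rule add_left_imp_eq)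
  qed
  have ppow: "\<phi> (x ^ n) = \<phi> x ^ n" for x n
    by (induction n) (simp_all add: p1 pmult)
  have pdiff: "\<phi> (x - y) = \<phi> x - \<phi> y" for x y
    using padd[of "x - y" y] by (simp add: eq_diff_eq)
  have pinv: "\<phi> (inverse x) = inverse (\<phi> x)" for x
  proof (cases "x = 0")
    case True then show ?thesis by (simp add: p0)
  next
    case False
    then have "\<phi> x * \<phi> (inverse x) = 1" using pmult[of x "inverse x"] p1 by simp
    then show ?thesis by (metis inverse_unique)
  qed
  have pdiv: "\<phi> (x / y) = \<phi> x / \<phi> y" for x y
    by (simp add: divide_inverse pmult pinv)
  have pz: "\<phi> x = 0 \<longleftrightarrow> x = 0" for x
    using pinj p0 by (metis injD)
  obtain \<gamma> :: 'b where gnz: "\<gamma> \<noteq> 0" and gord: "\<forall>i. \<gamma> ^ i = 1 \<longleftrightarrow> (q * q - 1) dvd i"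
    using gen_exists[where 'a='b] cB by auto
  define \<omega> where "\<omega> = \<gamma> ^ K"
  have onz: "\<omega> \<noteq> 0" using gnz by (simp add: \<omega>_def)
  have o2c: "\<omega> ^ (2 * c) = 1"
    using gord NB Kdef by (simp add: \<omega>_def power_mult[symmetric] mult.commute)
  have oc1: "\<omega> ^ c \<noteq> 1"
  proof
    assume "\<omega> ^ c = 1"
    then have "(q * q - 1) dvd K * c" using gord by (simp add: \<omega>_def power_mult[symmetric])
    then have "2 * c * K dvd K * c" using NB Kdef by simp
    then have "2 * (c * K) dvd 1 * (c * K)" by (simp add: mult.commute mult.left_commute)
    moreover have "c * K > 0" using cpos Kpos by simp
    ultimately have "2 * (c * K) \<le> 1 * (c * K)" by (intro dvd_imp_le) auto
    then show False using \<open>c * K > 0\<close> by simp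
  qed
  have ocm: "\<omega> ^ c = - 1"
  proof -
    have "(\<omega> ^ c) ^ 2 = 1" using o2c by (simp add: power_mult[symmetric] mult.commute)
    then show ?thesis using oc1 by (simp add: power2_eq_1_iff)
  qed
  have two: "(2::'b) \<noteq> 0"
  proof
    assume h: "(2::'b) = 0"
    obtain j where "p = 2 * j + 1" using podd by (metis oddE)
    then have "(of_nat p :: 'b) = 2 * of_nat j + 1" by simp
    then show False using h pb by simp
  qed
  have oq: "\<omega> ^ q = - \<omega>"
  proof -
    have "\<omega> ^ (q - 1) = (\<omega> ^ c) ^ k" using kc by (simp add: power_mult[symmetric] mult.commute)
    also have "\<dots> = - 1" using ocm kodd by (simp add: k_def)
    finally have "\<omega> * \<omega> ^ (q - 1) = - \<omega>" by simp
    moreover have "\<omega> ^ q = \<omega> * \<omega> ^ (q - 1)" using power_Suc[of \<omega> "q - 1"] q3 by simp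
    ultimately show ?thesis by simp
  qed
  have xq: "x ^ q = x" for x :: 'a
  proof (cases "x = 0")
    case True then show ?thesis using q3 by simp
  next
    case False
    then have "x ^ (q - 1) = 1" using unit_pow_card[of x] cA by simp
    moreover have "x ^ q = x * x ^ (q - 1)" using power_Suc[of x "q - 1"] q3 by simp
    ultimately show ?thesis by simp
  qed
  have onotin: "\<omega> \<noteq> \<phi> x" for x
  proof
    assume "\<omega> = \<phi> x"
    moreover have "\<phi> x ^ q = \<phi> x"
    proof -
      have "\<phi> x ^ q = \<phi> (x ^ q)" by (rule ppow[symmetric])
      also have "\<dots> = \<phi> x" by (simp only: xq)
      finally show ?thesis .
    qed
    ultimately have h: "\<omega> ^ q = \<omega>" by simp
    have "- \<omega> = \<omega>" using oq h by metis
    then have "\<omega> + \<omega> = 0" by (metis add.right_inverse)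
    then have "2 * \<omega> = 0" by (simp only: mult_2)
    then show False using two onz by (metis no_zero_divisors)
  qed
  have uniq: "u = u' \<and> v = v'" if e: "\<phi> u + \<omega> * \<phi> v = \<phi> u' + \<omega> * \<phi> v'" for u v u' v'
  proof (cases "v = v'")
    case True then show ?thesis using e pinj by (simp add: inj_eq)
  next
    case False
    have "\<omega> * (\<phi> v - \<phi> v') = (\<phi> u + \<omega> * \<phi> v) - \<omega> * \<phi> v' - \<phi> u"
      by (simp add: algebra_simps)
    also have "\<dots> = (\<phi> u' + \<omega> * \<phi> v') - \<omega> * \<phi> v' - \<phi> u" using e by simp
    also have "\<dots> = \<phi> u' - \<phi> u" by simp
    finally have "\<omega> * (\<phi> v - \<phi> v') = \<phi> u' - \<phi> u" .
    moreover have "\<phi> v - \<phi> v' \<noteq> 0" using False pz pdiff by (metis right_minus_eq)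
    ultimately have "\<omega> = (\<phi> u' - \<phi> u) / (\<phi> v - \<phi> v')" by (simp add: eq_divide_eq)
    then have "\<omega> = \<phi> ((u' - u) / (v - v'))" by (simp add: pdiv pdiff)
    then show ?thesis using onotin by blast
  qed
  have decomp: "\<exists>u v. z = \<phi> u + \<omega> * \<phi> v" for z
  proof -
    define F where "F = (\<lambda>(u, v). \<phi> u + \<omega> * \<phi> v)"
    have "inj F" unfolding F_def by (rule injI) (use uniq in auto)
    then have "card (range F) = card (UNIV :: ('a \<times> 'a) set)" by (simp add: card_image)
    also have "\<dots> = q * q" using cA by (simp add: UNIV_Times_UNIV[symmetric] card_cartesian_product del: UNIV_Times_UNIV)
    finally have "range F = UNIV" using cB by (intro card_subset_eq) auto
    then have "z \<in> range F" by simp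
    then obtain w where "z = F w" by blast
    then show ?thesis unfolding F_def by (cases w) auto
  qed
  have kdvA: "k dvd card (UNIV::'a set) - 1" using kc cA by simp
  have kdivA: "(card (UNIV::'a set) - 1) div k = c" using kc cA kpos by simp
  have KdvB: "K dvd card (UNIV::'b set) - 1" using NB cB Kdef by simp
  have KdivB: "(card (UNIV::'b set) - 1) div K = 2 * c" using NB cB Kdef Kpos by simp
  have cdvA: "c dvd card (UNIV::'a set) - 1" using cdv cA by simp
  have cdvB: "c dvd card (UNIV::'b set) - 1" using NB cB Kdef by simp
  have muA: "card {w::'a. w ^ c = 1} = c" using roots_card[OF cdvA] .
  have muB: "card {z::'b. z ^ c = 1} = c" using roots_card[OF cdvB] .
  have musub: "\<phi> ` {w::'a. w ^ c = 1} \<subseteq> {z::'b. z ^ c = 1}"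
  proof
    fix z assume "z \<in> \<phi> ` {w::'a. w ^ c = 1}"
    then obtain w where w: "w ^ c = 1" "z = \<phi> w" by blast
    have "z ^ c = \<phi> (w ^ c)" using w(2) ppow[of w c] by simp
    then show "z \<in> {z::'b. z ^ c = 1}" using w(1) p1 by simp
  qed
  have mucard: "card (\<phi> ` {w::'a. w ^ c = 1}) = card {z::'b. z ^ c = 1}"
  proof -
    have "inj_on \<phi> {w::'a. w ^ c = 1}" using inj_on_subset[OF pinj subset_UNIV] .
    then have "card (\<phi> ` {w::'a. w ^ c = 1}) = card {w::'a. w ^ c = 1}" by (rule card_image)
    then show ?thesis using muA muB by simp
  qed
  have mu_eq: "\<phi> ` {w::'a. w ^ c = 1} = {z::'b. z ^ c = 1}"
    using card_subset_eq[OF _ musub mucard] by simp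
  have muk: "\<exists>x. z = \<phi> (x ^ k)" if zc: "z ^ c = 1" for z :: 'b
  proof -
    have "z \<in> \<phi> ` {w::'a. w ^ c = 1}" using zc mu_eq by simp
    then obtain w where w: "w ^ c = 1" "z = \<phi> w" by blast
    have wnz: "w \<noteq> 0" using w(1) cpos by (metis power_0_left zero_neq_one neq0_conv)
    have "\<exists>x. w = x ^ k" using pow_char[OF kdvA wnz] w(1) kdivA by simp
    then show ?thesis using w(2) by blast
  qed
  have Q1: "\<exists>x. y ^ K = \<phi> (x ^ k) \<or> y ^ K = \<omega> * \<phi> (x ^ k)" for y :: 'b
  proof (cases "y = 0")
    case True
    then show ?thesis using Kpos kpos p0 by (intro exI[of _ 0]) (simp add: zero_power)
  next
    case False
    define z where "z = y ^ K"
    have znz: "z \<noteq> 0" using False by (simp add: z_def)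
    have "z ^ (2 * c) = 1" using pow_char[OF KdvB znz] KdivB by (auto simp: z_def)
    then have "(z ^ c) ^ 2 = 1" by (simp add: power_mult[symmetric] mult.commute)
    then have "z ^ c = 1 \<or> z ^ c = - 1" by (simp add: power2_eq_1_iff)
    then show ?thesis
    proof
      assume "z ^ c = 1"
      then obtain x where "z = \<phi> (x ^ k)" using muk by blast
      then have "y ^ K = \<phi> (x ^ k)" using z_def by simp
      then show ?thesis by blast
    next
      assume zc: "z ^ c = - 1"
      have "(z / \<omega>) ^ c = 1" using zc ocm by (simp add: power_divide)
      then obtain x where "z / \<omega> = \<phi> (x ^ k)" using muk by blast
      then have "z = \<omega> * \<phi> (x ^ k)" using onz by (simp add: divide_eq_eq mult.commute)
      then have "y ^ K = \<omega> * \<phi> (x ^ k)" using z_def by simp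
      then show ?thesis by blast
    qed
  qed
  have xkc: "(x ^ k) ^ (2 * c) = 1" if "x \<noteq> 0" for x :: 'a
  proof -
    have "x ^ (q - 1) = 1" using unit_pow_card[OF that] cA by simp
    then have "(x ^ (k * c)) ^ 2 = 1" using kc by simp
    then have "x ^ (k * c * 2) = 1" by (simp only: power_mult)
    moreover have "k * c * 2 = k * (2 * c)" by simp
    ultimately show ?thesis by (simp only: power_mult)
  qed
  have Q2a: "\<exists>y. \<phi> (x ^ k) = y ^ K" for x :: 'a
  proof (cases "x = 0")
    case True then show ?thesis using Kpos kpos p0 by (intro exI[of _ 0]) (simp add: zero_power)
  next
    case False
    have wnz: "\<phi> (x ^ k) \<noteq> 0" using False pz by simp
    have "\<phi> (x ^ k) ^ (2 * c) = \<phi> ((x ^ k) ^ (2 * c))" by (simp only: ppow)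
    then have "\<phi> (x ^ k) ^ (2 * c) = 1" using xkc[OF False] p1 by simp
    then show ?thesis using pow_char[OF KdvB wnz] KdivB by simp
  qed
  have Q2b: "\<exists>y. \<omega> * \<phi> (x ^ k) = y ^ K" for x :: 'a
  proof (cases "x = 0")
    case True then show ?thesis using Kpos kpos p0 by (intro exI[of _ 0]) (simp add: zero_power)
  next
    case False
    have wnz: "\<omega> * \<phi> (x ^ k) \<noteq> 0" using False pz onz by simp
    have "\<phi> (x ^ k) ^ (2 * c) = \<phi> ((x ^ k) ^ (2 * c))" by (simp only: ppow)
    then have "\<phi> (x ^ k) ^ (2 * c) = 1" using xkc[OF False] p1 by simp
    then have "(\<omega> * \<phi> (x ^ k)) ^ (2 * c) = 1" using o2c by (simp add: power_mult_distrib)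
    then show ?thesis using pow_char[OF KdvB wnz] KdivB by simp
  qed
  have TA: "sum_of_kth_powers K i (\<phi> u) \<and> sum_of_kth_powers K i (\<omega> * \<phi> u)"
    if "sum_of_kth_powers k i u" for i u
    using that
  proof (induction i arbitrary: u)
    case 0
    then have "u = 0" by (simp add: S0)
    then show ?case by (simp add: S0 p0)
  next
    case (Suc i)
    then obtain u' x where u': "sum_of_kth_powers k i u'" "u = u' + x ^ k" by (auto simp: S_suc)
    obtain y1 where y1: "\<phi> (x ^ k) = y1 ^ K" using Q2a by blast
    obtain y2 where y2: "\<omega> * \<phi> (x ^ k) = y2 ^ K" using Q2b by blast
    have IH: "sum_of_kth_powers K i (\<phi> u')" "sum_of_kth_powers K i (\<omega> * \<phi> u')" using Suc u' by auto
    have "\<phi> u = \<phi> u' + y1 ^ K" using u' y1 padd by simp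
    moreover have "\<omega> * \<phi> u = \<omega> * \<phi> u' + y2 ^ K" using u' y2 padd by (simp add: distrib_left)
    ultimately show ?case using IH unfolding S_suc by blast
  qed
  have Bfwd: "\<exists>u v i j. i + j = s \<and> sum_of_kth_powers k i u \<and> sum_of_kth_powers k j v
               \<and> z = \<phi> u + \<omega> * \<phi> v" if "sum_of_kth_powers K s z" for s z
    using that
  proof (induction s arbitrary: z)
    case 0
    then have "z = 0" by (simp add: S0)
    then show ?case using p0 by (intro exI[of _ 0] exI[of _ 0] exI[of _ 0] exI[of _ 0]) (simp add: S0)
  next
    case (Suc s)
    then obtain z' y where z': "sum_of_kth_powers K s z'" "z = z' + y ^ K" by (auto simp: S_suc)
    then obtain u v i j where uv: "i + j = s" "sum_of_kth_powers k i u" "sum_of_kth_powers k j v"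
      "z' = \<phi> u + \<omega> * \<phi> v" using Suc by blast
    obtain x where "y ^ K = \<phi> (x ^ k) \<or> y ^ K = \<omega> * \<phi> (x ^ k)" using Q1 by blast
    then show ?case
    proof
      assume h: "y ^ K = \<phi> (x ^ k)"
      have "sum_of_kth_powers k (Suc i) (u + x ^ k)" using uv(2) unfolding S_suc by blast
      moreover have "z = \<phi> (u + x ^ k) + \<omega> * \<phi> v" using z' uv h padd by (simp add: algebra_simps)
      ultimately show ?case using uv by (intro exI[of _ "u + x ^ k"] exI[of _ v] exI[of _ "Suc i"] exI[of _ j]) simp
    next
      assume h: "y ^ K = \<omega> * \<phi> (x ^ k)"
      have "sum_of_kth_powers k (Suc j) (v + x ^ k)" using uv(3) unfolding S_suc by blast
      moreover have "z = \<phi> u + \<omega> * \<phi> (v + x ^ k)" using z' uv h padd by (simp add: algebra_simps)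
      ultimately show ?case using uv by (intro exI[of _ u] exI[of _ "v + x ^ k"] exI[of _ i] exI[of _ "Suc j"]) simp
    qed
  qed
  have Bbwd: "sum_of_kth_powers K s (\<phi> u + \<omega> * \<phi> v)"
    if "i + j \<le> s" "sum_of_kth_powers k i u" "sum_of_kth_powers k j v" for s i j u v
  proof -
    have "sum_of_kth_powers K (i + j) (\<phi> u + \<omega> * \<phi> v)"
      using TA[OF that(2)] TA[OF that(3)] by (intro S_add) auto
    then show ?thesis using S_mono Kpos that(1) by blast
  qed
  have exA: "\<exists>s. \<forall>x::'a. sum_of_kth_powers k s x"
    using waring_exists[OF p apos cpos pd cardA k_def kpos] .
  define g where "g = waring_number k TYPE('a)"
  have g_eq: "g = (LEAST s. \<forall>x::'a. sum_of_kth_powers k s x)" by (simp add: g_def waring_number_def)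
  have gall: "\<forall>x::'a. sum_of_kth_powers k g x" unfolding g_eq using exA by (rule LeastI_ex)
  have gpos: "g > 0"
  proof (rule ccontr)
    assume "\<not> g > 0"
    then have "sum_of_kth_powers k 0 (1::'a)" using gall by simp
    then show False by (simp add: S0)
  qed
  have "\<not> (\<forall>x::'a. sum_of_kth_powers k (g - 1) x)"
    unfolding g_eq by (rule not_less_Least) (use gpos g_eq in simp)
  then obtain u0 :: 'a where u0: "\<not> sum_of_kth_powers k (g - 1) u0" by blast
  have "waring_number K TYPE('b) = 2 * g"
    unfolding waring_number_def
  proof (rule Least_equality)
    show "\<forall>z::'b. sum_of_kth_powers K (2 * g) z"
    proof
      fix z :: 'b
      obtain u v where "z = \<phi> u + \<omega> * \<phi> v" using decomp by blast
      then show "sum_of_kth_powers K (2 * g) z" using Bbwd[of g g "2 * g" u v] gall by simp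
    qed
  next
    fix s assume all: "\<forall>z::'b. sum_of_kth_powers K s z"
    then obtain u v i j where uv: "i + j = s" "sum_of_kth_powers k i u" "sum_of_kth_powers k j v"
      "\<phi> u0 + \<omega> * \<phi> u0 = \<phi> u + \<omega> * \<phi> v" using Bfwd by blast
    have "u0 = u \<and> u0 = v" using uniq[OF uv(4)] .
    then have iu: "sum_of_kth_powers k i u0" and ju: "sum_of_kth_powers k j u0" using uv by auto
    have "g \<le> i"
    proof (rule ccontr)
      assume "\<not> g \<le> i"
      then have "i \<le> g - 1" by simp
      then show False using S_mono[OF kpos iu] u0 by blast
    qed
    moreover have "g \<le> j"
    proof (rule ccontr)
      assume "\<not> g \<le> j"
      then have "j \<le> g - 1" by simp
      then show False using S_mono[OF kpos ju] u0 by blast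
    qed
    ultimately show "2 * g \<le> s" using uv(1) by simp
  qed
  then show ?thesis by (simp add: K_def k_def g_def)
qed
end
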